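(* Let $r\ge 2$ and let $H$ be an $r$-graph with at least $g(r,4)$ edges. Then there is a constant $b=b(H)>0$ such that $C_r(n,H)=\Omega(n^b)$ as $n\to\infty$.
   Context: An $r$-graph is an $r$-uniform hypergraph; $K_n^{(r)}$ is the complete $r$-graph on $n$ vertices. A copy of an $r$-graph $H$ in $K_n^{(r)}$ is a subhypergraph isomorphic to $H$. An $(n,r,H)$-local coloring with $k$ colors is a family of edge-colorings $f_v:E(K_n^{(r)})\to[k]$, one per vertex $v$, such that for every copy $T$ of $H$ there is $u\in V(T)$ with $f_u$ injective on $E(T)$. $C_r(n,H)$ is the minimum such $k$. A sunflower $S_r(d,m)$ is an $r$-graph with $m$ edges that pairwise intersect in the same $d$-vertex set. $g(r,m)$ denotes the minimum integer $N$ such that every $r$-graph with at least $N$ edges contains a sunflower $S_r(d,m)$ for some $0\le d\le r-1$ (by Erdős–Rado, $(m-1)^r\le g(r,m)\le (m-1)^r r!+1$). *)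

theory Defs
  imports Main "HOL-Library.Landau_Symbols"
begin

definition is_rgraph :: "nat \<Rightarrow> 'a set \<Rightarrow> 'a set set \<Rightarrow> bool" where
  "is_rgraph r V E \<longleftrightarrow> finite V \<and> (\<forall>e\<in>E. e \<subseteq> V \<and> card e = r)"

definition Kedges :: "nat \<Rightarrow> nat \<Rightarrow> nat set set" where
  "Kedges n r = {e. e \<subseteq> {..<n} \<and> card e = r}"

text \<open>Copies of H in the complete r-graph on {0..<n} are the images of injections
  phi : V -> {0..<n}; its vertex set is phi ` V and its edge set is the image of E.\<close>
definition local_coloring ::
  "nat \<Rightarrow> nat \<Rightarrow> 'a set \<Rightarrow> 'a set set \<Rightarrow> nat \<Rightarrow> (nat \<Rightarrow> nat set \<Rightarrow> nat) \<Rightarrow> bool" where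
  "local_coloring n r V E k f \<longleftrightarrow>
     (\<forall>v<n. \<forall>e\<in>Kedges n r. f v e \<in> {1..k}) \<and>
     (\<forall>\<phi>. inj_on \<phi> V \<and> \<phi> ` V \<subseteq> {..<n} \<longrightarrow>
        (\<exists>u\<in>\<phi> ` V. inj_on (f u) ((\<lambda>e. \<phi> ` e) ` E)))"

definition C_loc :: "nat \<Rightarrow> nat \<Rightarrow> 'a set \<Rightarrow> 'a set set \<Rightarrow> nat" where
  "C_loc r n V E = (LEAST k. \<exists>f. local_coloring n r V E k f)"

definition has_sunflower :: "'a set set \<Rightarrow> nat \<Rightarrow> nat \<Rightarrow> bool" where
  "has_sunflower E d m \<longleftrightarrow>
     (\<exists>S K. S \<subseteq> E \<and> card S = m \<and> card K = d \<and>
        (\<forall>e\<in>S. \<forall>e'\<in>S. e \<noteq> e' \<longrightarrow> e \<inter> e' = K))"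

text \<open>g(r,m): least N such that every (finite) r-graph with at least N edges contains
  a sunflower S_r(d,m) for some 0 <= d <= r-1.  Vertices taken from nat (w.l.o.g.).\<close>
definition g_sun :: "nat \<Rightarrow> nat \<Rightarrow> nat" where
  "g_sun r m = (LEAST N. \<forall>(V::nat set) E. is_rgraph r V E \<and> card E \<ge> N \<longrightarrow>
                    (\<exists>d\<le>r-1. has_sunflower E d m))"

end

theory Submission
  imports Defs "HOL-Library.FuncSet"
begin

lemma pig_fiber:
  assumes "finite A" "finite B" "\<forall>x\<in>A. g x \<in> B" "card A > card B * t"
  shows "\<exists>y. card {x\<in>A. g x = y} > t"
proof -
  have "A \<noteq> {}" using assms(4) by (metis card.empty less_nat_zero_code)
  hence "B \<noteq> {}" using assms(3) by auto
  then obtain y where "y \<in> B" "card A \<le> card (g -` {y} \<inter> A) * card B"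
    using pigeonhole_card[of g A B] assms by auto
  moreover have "g -` {y} \<inter> A = {x\<in>A. g x = y}" by auto
  ultimately have "card A \<le> card {x\<in>A. g x = y} * card B" by simp
  hence "card B * t < card {x\<in>A. g x = y} * card B" using assms(4) by linarith
  hence "t < card {x\<in>A. g x = y}"
    by (metis mult.commute mult_less_cancel2)
  thus ?thesis by blast
qed

lemma pig_coll:
  assumes "finite A" "finite B" "\<forall>x\<in>A. g x \<in> B" "card A > card B"
  shows "\<exists>x\<in>A. \<exists>y\<in>A. x \<noteq> y \<and> g x = g y"
proof -
  have "card (g ` A) \<le> card B" using assms by (intro card_mono) auto
  hence "\<not> inj_on g A" using assms(4) pigeonhole by (metis le_less_trans)
  thus ?thesis unfolding inj_on_def by blast
qed

lemma core:
  fixes F :: "nat \<Rightarrow> 'b" and \<chi> :: "nat \<Rightarrow> nat \<Rightarrow> 'c"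
  assumes "\<forall>j<M. F j \<in> BF" "finite BF" "\<forall>x<M. \<forall>y<M. \<chi> x y \<in> BC" "finite BC"
    "M > card BF * (card BC^2 * (card BC+1)^2 + card BC + 1)"
  shows "\<exists>a b c d. a<M \<and> b<M \<and> c<M \<and> d<M \<and> a \<noteq> b \<and> a \<noteq> c \<and> a \<noteq> d \<and> b \<noteq> c
     \<and> b \<noteq> d \<and> c \<noteq> d \<and> F c = F d \<and> \<chi> a c = \<chi> a d \<and> \<chi> b c = \<chi> b d
     \<and> \<chi> c a = \<chi> c b \<and> \<chi> d a = \<chi> d b"
proof -
  define L where "L = card BC"
  obtain z where z: "card {x\<in>{..<M}. F x = z} > L^2 * (L+1)^2 + L + 1"
    using pig_fiber[of "{..<M}" BF F "L^2 * (L+1)^2 + L + 1"] assms unfolding L_def by auto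
  define J where "J = {x\<in>{..<M}. F x = z}"
  have fJ: "finite J" unfolding J_def by auto
  have "L + 1 \<le> card J" using z unfolding J_def by simp
  then obtain A where A: "A \<subseteq> J" "card A = L + 1" "finite A"
    by (metis obtain_subset_with_card_n)
  define J' where "J' = J - A"
  have cJ': "card J' > L^2 * (L+1)^2"
    using z A fJ unfolding J'_def J_def[symmetric] by (simp add: card_Diff_subset)
  have ex: "\<exists>p. fst p \<in> A \<and> snd p \<in> A \<and> fst p \<noteq> snd p \<and> \<chi> x (fst p) = \<chi> x (snd p)"
    if "x \<in> J'" for x
  proof -
    have "\<forall>y\<in>A. \<chi> x y \<in> BC" using assms(3) A that unfolding J'_def J_def by auto
    then obtain a b where "a\<in>A" "b\<in>A" "a\<noteq>b" "\<chi> x a = \<chi> x b"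
      using pig_coll[of A BC "\<chi> x"] A assms(4) unfolding L_def by auto
    thus ?thesis by (intro exI[of _ "(a,b)"]) auto
  qed
  define pr where "pr x = (SOME p. fst p \<in> A \<and> snd p \<in> A \<and> fst p \<noteq> snd p \<and> \<chi> x (fst p) = \<chi> x (snd p))" for x
  have pr: "fst (pr x) \<in> A \<and> snd (pr x) \<in> A \<and> fst (pr x) \<noteq> snd (pr x) \<and> \<chi> x (fst (pr x)) = \<chi> x (snd (pr x))"
    if "x \<in> J'" for x unfolding pr_def using someI_ex[OF ex[OF that]] .
  have "card J' > card (A \<times> A) * L^2"
    using cJ' A by (simp add: power2_eq_square mult.commute)
  then obtain q where q: "card {x\<in>J'. pr x = q} > L^2"
    using pig_fiber[of J' "A \<times> A" pr "L^2"] A fJ pr unfolding J'_def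
    by (auto simp: mem_Times_iff)
  define T where "T = {x\<in>J'. pr x = q}"
  have "T \<noteq> {}" using q unfolding T_def by (metis card.empty less_nat_zero_code)
  then obtain x0 where "x0 \<in> T" by auto
  define a where "a = fst q"
  define b where "b = snd q"
  have ab: "a \<in> A" "b \<in> A" "a \<noteq> b" using pr[of x0] \<open>x0 \<in> T\<close> unfolding T_def a_def b_def by auto
  have Tp: "\<chi> x a = \<chi> x b" if "x \<in> T" for x using pr[of x] that unfolding T_def a_def b_def by auto
  have fT: "finite T" unfolding T_def J'_def using fJ by auto
  have TJ: "T \<subseteq> J'" unfolding T_def by auto
  have "\<forall>x\<in>T. (\<chi> a x, \<chi> b x) \<in> BC \<times> BC"
    using assms(3) TJ A ab unfolding J'_def J_def by blast
  moreover have "card T > card (BC \<times> BC)" using q unfolding T_def L_def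
    by (simp add: card_cartesian_product power2_eq_square)
  ultimately obtain c d where cd: "c\<in>T" "d\<in>T" "c\<noteq>d" "(\<chi> a c, \<chi> b c) = (\<chi> a d, \<chi> b d)"
    using pig_coll[of T "BC \<times> BC" "\<lambda>x. (\<chi> a x, \<chi> b x)"] fT assms(4) by blast
  have "c \<in> J'" "d \<in> J'" using cd TJ by auto
  hence "c \<notin> A" "d \<notin> A" "c \<in> J" "d \<in> J" unfolding J'_def by auto
  moreover have "a \<in> J" "b \<in> J" using ab A by auto
  ultimately show ?thesis using ab cd Tp[of c] Tp[of d] unfolding J_def
    by (intro exI[of _ a] exI[of _ b] exI[of _ c] exI[of _ d]) auto
qed

lemma sunflower_aux:
  "\<forall>F::'a set set. finite F \<and> (\<forall>e\<in>F. finite e \<and> card e = r) \<and> card F > (m-1)^r * fact r \<longrightarrow>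
     (\<exists>S K. S \<subseteq> F \<and> card S = m \<and> (\<forall>e\<in>S. \<forall>e'\<in>S. e\<noteq>e' \<longrightarrow> e\<inter>e' = K))"
proof (induction r)
  case 0
  show ?case
  proof (intro allI impI)
    fix F :: "'a set set"
    assume h: "finite F \<and> (\<forall>e\<in>F. finite e \<and> card e = 0) \<and> card F > (m-1)^0 * fact 0"
    hence "F \<subseteq> {{}}" by auto
    hence "card F \<le> card {{}::'a set}" by (intro card_mono) auto
    hence "card F \<le> 1" by simp
    with h show "\<exists>S K. S \<subseteq> F \<and> card S = m \<and> (\<forall>e\<in>S. \<forall>e'\<in>S. e\<noteq>e' \<longrightarrow> e\<inter>e' = K)" by simp
  qed
next
  case (Suc r)
  show ?case
  proof (intro allI impI)
    fix F :: "'a set set"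
    assume h: "finite F \<and> (\<forall>e\<in>F. finite e \<and> card e = Suc r) \<and> card F > (m-1)^Suc r * fact (Suc r)"
    have fF: "finite F" and Fe: "\<And>e. e \<in> F \<Longrightarrow> finite e \<and> card e = Suc r"
      and cF: "card F > (m-1)^Suc r * fact (Suc r)" using h by (blast, blast, blast)
    define D where "D = {G. G \<subseteq> F \<and> (\<forall>a\<in>G. \<forall>b\<in>G. a \<noteq> b \<longrightarrow> a \<inter> b = {})}"
    have "D \<subseteq> Pow F" unfolding D_def by blast
    hence fD: "finite D" using fF by (meson finite_Pow_iff finite_subset)
    have "{} \<in> D" unfolding D_def by auto
    hence neD: "card ` D \<noteq> {}" by auto
    obtain G where GD: "G \<in> D" and Gmax: "card G = Max (card ` D)"
      using Max_in[OF finite_imageI[OF fD] neD] by auto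
    have Gle: "card G' \<le> card G" if "G' \<in> D" for G'
      using Gmax Max_ge[OF finite_imageI[OF fD]] that by auto
    have GF: "G \<subseteq> F" and Gdis: "\<forall>a\<in>G. \<forall>b\<in>G. a \<noteq> b \<longrightarrow> a \<inter> b = {}" using GD unfolding D_def by auto
    have fG: "finite G" using GF fF finite_subset by auto
    show "\<exists>S K. S \<subseteq> F \<and> card S = m \<and> (\<forall>e\<in>S. \<forall>e'\<in>S. e\<noteq>e' \<longrightarrow> e\<inter>e' = K)"
    proof (cases "m \<le> card G")
      case True
      then obtain S where SG: "S \<subseteq> G" and cS: "card S = m" by (rule obtain_subset_with_card_n)
      have "\<forall>e\<in>S. \<forall>e'\<in>S. e\<noteq>e' \<longrightarrow> e\<inter>e' = {}" using Gdis SG by blast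
      moreover have "S \<subseteq> F" using SG GF by (rule subset_trans)
      ultimately show ?thesis using cS by (intro exI[of _ S] exI[of _ "{}"]) simp
    next
      case False
      define U where "U = \<Union>G"
      have hit: "e \<inter> U \<noteq> {}" if "e \<in> F" for e
      proof
        assume dis: "e \<inter> U = {}"
        have ne: "e \<noteq> {}" using Fe[OF that] by auto
        have "e \<notin> G" using dis ne unfolding U_def by auto
        have d1: "insert e G \<subseteq> F" using GF that by blast
        have d2: "\<forall>b\<in>G. e \<inter> b = {}" using dis unfolding U_def by blast
        have "\<forall>a\<in>insert e G. \<forall>b\<in>insert e G. a \<noteq> b \<longrightarrow> a \<inter> b = {}"
          using Gdis d2 by (simp add: Int_commute)
        hence "insert e G \<in> D" using d1 unfolding D_def by blast
        hence "card (insert e G) \<le> card G" by (rule Gle)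
        thus False using \<open>e \<notin> G\<close> fG by simp
      qed
      have fU: "finite U" unfolding U_def using fG GF Fe by auto
      have "card U \<le> sum card G" unfolding U_def by (rule card_Union_le_sum_card)
      also have "\<dots> = (\<Sum>g\<in>G. Suc r)" using GF Fe by (intro sum.cong) auto
      also have "\<dots> = card G * Suc r" by simp
      finally have cU0: "card U \<le> card G * Suc r" .
      have "card G \<le> m - 1" using False by simp
      hence cU: "card U \<le> (m-1) * Suc r" using cU0 by (meson le_trans mult_le_mono1)
      define Fx where "Fx x = {e\<in>F. x \<in> e}" for x
      have "F \<subseteq> (\<Union>x\<in>U. Fx x)" using hit unfolding Fx_def by auto
      hence "card F \<le> card (\<Union>x\<in>U. Fx x)" by (intro card_mono) (use fU fF Fx_def in auto)
      also have "\<dots> \<le> (\<Sum>x\<in>U. card (Fx x))" using card_UN_le fU by blast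
      finally have cFU: "card F \<le> (\<Sum>x\<in>U. card (Fx x))" .
      have "\<exists>x\<in>U. card F \<le> card (Fx x) * card U"
      proof (rule ccontr)
        assume "\<not> ?thesis"
        hence "\<forall>x\<in>U. card (Fx x) * card U < card F" by auto
        hence "U \<noteq> {} \<Longrightarrow> (\<Sum>x\<in>U. card (Fx x) * card U) < (\<Sum>x\<in>U. card F)"
          using fU by (intro sum_strict_mono) auto
        moreover have "U \<noteq> {}" using cF cFU by (cases "U = {}") auto
        ultimately have "(\<Sum>x\<in>U. card (Fx x) * card U) < card F * card U"
          by (simp add: mult.commute)
        hence "(\<Sum>x\<in>U. card (Fx x)) * card U < card F * card U"
          by (simp only: sum_distrib_right)
        hence "(\<Sum>x\<in>U. card (Fx x)) < card F" by (simp only: mult_less_cancel2)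
        thus False using cFU by simp
      qed
      then obtain x where xU: "x \<in> U" and cx: "card F \<le> card (Fx x) * card U" by auto
      have e1: "(m-1)^Suc r * fact (Suc r) = ((m-1) * Suc r) * ((m-1)^r * fact r)"
        by (simp only: power_Suc fact_Suc of_nat_id mult_ac)
      have "card (Fx x) * card U \<le> card (Fx x) * ((m-1) * Suc r)" using cU by (rule mult_le_mono2)
      hence "((m-1) * Suc r) * ((m-1)^r * fact r) < ((m-1) * Suc r) * card (Fx x)"
        using cF cx e1 by (simp only: mult.commute[of "card (Fx x)"])
      hence cFx: "(m-1)^r * fact r < card (Fx x)" by (simp only: mult_less_cancel1)
      define F' where "F' = (\<lambda>e. e - {x}) ` Fx x"
      have injd: "inj_on (\<lambda>e. e - {x}) (Fx x)" unfolding Fx_def inj_on_def by auto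
      have cF': "card F' = card (Fx x)" unfolding F'_def by (rule card_image[OF injd])
      have "finite F'" unfolding F'_def Fx_def using fF by simp
      moreover have "\<forall>e\<in>F'. finite e \<and> card e = r" unfolding F'_def Fx_def using Fe by auto
      moreover have "card F' > (m-1)^r * fact r" using cF' cFx by simp
      ultimately have "finite F' \<and> (\<forall>e\<in>F'. finite e \<and> card e = r) \<and> card F' > (m-1)^r * fact r"
        by blast
      then obtain S' K' where S': "S' \<subseteq> F'" "card S' = m" "\<forall>e\<in>S'. \<forall>e'\<in>S'. e\<noteq>e' \<longrightarrow> e\<inter>e' = K'"
        using Suc.IH by meson
      have xS': "x \<notin> e" if "e \<in> S'" for e using that S'(1) unfolding F'_def by auto
      define S where "S = insert x ` S'"
      have "inj_on (insert x) S'" unfolding inj_on_def using xS' by (metis insert_ident)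
      hence "card S = m" unfolding S_def using S'(2) by (simp add: card_image)
      moreover have "S \<subseteq> F" using S'(1) unfolding S_def F'_def Fx_def by (auto simp: insert_absorb)
      moreover have "\<forall>e\<in>S. \<forall>e'\<in>S. e\<noteq>e' \<longrightarrow> e\<inter>e' = insert x K'"
      proof (intro ballI impI)
        fix e e' assume "e \<in> S" "e' \<in> S" "e \<noteq> e'"
        then obtain s s' where ss: "s \<in> S'" "s' \<in> S'" "e = insert x s" "e' = insert x s'"
          unfolding S_def by blast
        hence "s \<noteq> s'" using \<open>e \<noteq> e'\<close> by blast
        hence "s \<inter> s' = K'" using S'(3) ss by blast
        thus "e \<inter> e' = insert x K'" using ss by blast
      qed
      ultimately show ?thesis by (intro exI[of _ S] exI[of _ "insert x K'"]) simp
    qed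
  qed
qed

lemma g_sun_prop:
  "\<forall>(V::nat set) E. is_rgraph r V E \<and> card E \<ge> g_sun r 4 \<longrightarrow> (\<exists>d\<le>r-1. has_sunflower E d 4)"
  unfolding g_sun_def
proof (rule LeastI_ex, rule exI[of _ "3^r * fact r + 1"], intro allI impI)
  fix V :: "nat set" and E
  assume h: "is_rgraph r V E \<and> 3 ^ r * fact r + 1 \<le> card E"
  have fV: "finite V" and Ee: "\<And>e. e \<in> E \<Longrightarrow> e \<subseteq> V \<and> card e = r" using h unfolding is_rgraph_def by auto
  have "E \<subseteq> Pow V" using Ee by blast
  hence fE: "finite E" using fV by (meson finite_Pow_iff finite_subset)
  have fe: "\<And>e. e \<in> E \<Longrightarrow> finite e" using Ee fV finite_subset by blast
  have "finite E \<and> (\<forall>e\<in>E. finite e \<and> card e = r) \<and> card E > (4-1)^r * fact r"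
    using fE fe Ee h by auto
  then obtain S K where SK: "S \<subseteq> E" "card S = 4" "\<forall>e\<in>S. \<forall>e'\<in>S. e\<noteq>e' \<longrightarrow> e\<inter>e' = K"
    using sunflower_aux[of r 4] by meson
  have "\<not> card S \<le> Suc 0" "finite S" using SK by (simp, metis card.infinite zero_neq_numeral)
  then obtain e e' where ee: "e \<in> S" "e' \<in> S" "e \<noteq> e'"
    using card_le_Suc0_iff_eq by blast
  have K: "K = e \<inter> e'" using SK ee by blast
  have eE: "e \<in> E" "e' \<in> E" using ee SK by auto
  have "K \<noteq> e"
  proof
    assume "K = e"
    hence "e \<subseteq> e'" using K by blast
    hence "e = e'" using eE Ee fe by (metis card_subset_eq)
    thus False using ee by simp
  qed
  hence "K \<subset> e" using K by blast
  hence "card K < r" using eE Ee fe by (metis psubset_card_mono)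
  hence "card K \<le> r - 1" by simp
  moreover have "has_sunflower E (card K) 4" unfolding has_sunflower_def using SK by blast
  ultimately show "\<exists>d\<le>r-1. has_sunflower E d 4" by blast
qed

lemma sunflower_in_E:
  fixes V :: "'a set" and E :: "'a set set"
  assumes "is_rgraph r V E" "card E \<ge> g_sun r 4"
  shows "\<exists>S K. S \<subseteq> E \<and> card S = 4 \<and> (\<forall>e\<in>S. \<forall>e'\<in>S. e\<noteq>e' \<longrightarrow> e\<inter>e' = K)"
proof -
  have fV: "finite V" and Ee: "\<And>e. e \<in> E \<Longrightarrow> e \<subseteq> V \<and> card e = r" using assms unfolding is_rgraph_def by auto
  obtain h :: "'a \<Rightarrow> nat" and N where hN: "h ` V = {i. i < N}" "inj_on h V"
    using finite_imp_inj_to_nat_seg[OF fV] by blast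
  define E' where "E' = (\<lambda>e. h ` e) ` E"
  have EP: "E \<subseteq> Pow V" using Ee by blast
  have injE: "inj_on (\<lambda>e. h ` e) E" using inj_on_image_Pow[OF hN(2)] EP by (rule inj_on_subset)
  have cE': "card E' = card E" unfolding E'_def using injE by (rule card_image)
  have "\<forall>e'\<in>E'. e' \<subseteq> h ` V \<and> card e' = r"
  proof
    fix e' assume "e' \<in> E'"
    then obtain e where e: "e \<in> E" "e' = h ` e" unfolding E'_def by blast
    have "inj_on h e" using hN(2) Ee[OF e(1)] inj_on_subset by blast
    thus "e' \<subseteq> h ` V \<and> card e' = r" using e Ee[OF e(1)] by (simp add: card_image image_mono)
  qed
  hence "is_rgraph r (h ` V) E' \<and> card E' \<ge> g_sun r 4" unfolding is_rgraph_def using fV cE' assms(2) by simp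
  then obtain d where "d \<le> r - 1" "has_sunflower E' d 4"
    using g_sun_prop[of r, rule_format] by blast
  then obtain S' K' where S': "S' \<subseteq> E'" "card S' = 4" "\<forall>e\<in>S'. \<forall>e'\<in>S'. e\<noteq>e' \<longrightarrow> e\<inter>e' = K'"
    unfolding has_sunflower_def by blast
  define S where "S = {e\<in>E. h ` e \<in> S'}"
  define K where "K = {v\<in>V. h v \<in> K'}"
  have "(\<lambda>e. h ` e) ` S = S'"
  proof
    show "(\<lambda>e. h ` e) ` S \<subseteq> S'" unfolding S_def by auto
    show "S' \<subseteq> (\<lambda>e. h ` e) ` S"
    proof
      fix s assume "s \<in> S'"
      moreover then obtain e where "e \<in> E" "s = h ` e" using S'(1) unfolding E'_def by auto
      ultimately show "s \<in> (\<lambda>e. h ` e) ` S" unfolding S_def by auto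
    qed
  qed
  moreover have SE: "S \<subseteq> E" unfolding S_def by blast
  moreover have "card ((\<lambda>e. h ` e) ` S) = card S" by (rule card_image[OF inj_on_subset[OF injE SE]])
  ultimately have cS: "card S = 4" using S'(2) by simp
  have "\<forall>e\<in>S. \<forall>e'\<in>S. e\<noteq>e' \<longrightarrow> e\<inter>e' = K"
  proof (intro ballI impI)
    fix e e' assume ee: "e \<in> S" "e' \<in> S" "e \<noteq> e'"
    have eE: "e \<in> E" "e' \<in> E" and hS: "h ` e \<in> S'" "h ` e' \<in> S'" using ee unfolding S_def by auto
    have eV: "e \<subseteq> V" "e' \<subseteq> V" using Ee[OF eE(1)] Ee[OF eE(2)] by simp_all
    have "h ` e \<noteq> h ` e'" using inj_on_contraD[OF injE ee(3) eE] .
    hence hK: "h ` e \<inter> h ` e' = K'" by (rule S'(3)[rule_format, OF hS])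
    show "e \<inter> e' = K"
    proof
      show "e \<inter> e' \<subseteq> K" using hK eV unfolding K_def by auto
      show "K \<subseteq> e \<inter> e'"
      proof
        fix v assume "v \<in> K"
        hence v: "v \<in> V" "h v \<in> h ` e" "h v \<in> h ` e'" using hK unfolding K_def by auto
        then obtain w w' where "w \<in> e" "h w = h v" "w' \<in> e'" "h w' = h v" by auto
        moreover have "w = v" using inj_onD[OF hN(2) \<open>h w = h v\<close>] \<open>w \<in> e\<close> eV v(1) by blast
        moreover have "w' = v" using inj_onD[OF hN(2) \<open>h w' = h v\<close>] \<open>w' \<in> e'\<close> eV v(1) by blast
        ultimately show "v \<in> e \<inter> e'" by blast
      qed
    qed
  qed
  thus ?thesis using cS SE by (intro exI[of _ S] exI[of _ K]) simp
qed

lemma card4: "card (S::'a set) = 4 \<Longrightarrow> \<exists>a b c d. S = {a,b,c,d} \<and> a\<noteq>b \<and> a\<noteq>c \<and> a\<noteq>d \<and> b\<noteq>c \<and> b\<noteq>d \<and> c\<noteq>d"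
  by (auto simp: card_Suc_eq numeral_eq_Suc)

lemma arith1:
  fixes k p n n0 :: nat
  assumes "k \<ge> 1" "p \<ge> 1" "(n - n0) div p \<le> k^n0 * ((k^p)^2 * (k^p+1)^2 + k^p + 1)"
  shows "n \<le> (n0 + 7*p) * k^(n0+4*p)"
proof -
  define L where "L = k^p"
  have L1: "L \<ge> 1" unfolding L_def using assms by simp
  have "(L+1)^2 \<le> (2*L)^2" using L1 by (intro power_mono) auto
  hence "L^2 * (L+1)^2 \<le> L^2 * (2*L)^2" by (rule mult_le_mono2)
  moreover have "L^2 * (2*L)^2 = 4 * L^4" by (simp add: power2_eq_square power4_eq_xxxx mult_ac)
  ultimately have a: "L^2 * (L+1)^2 \<le> 4 * L^4" by (simp only:)
  have "L \<le> L^4" using L1 by (simp add: power4_eq_xxxx)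
  hence t: "L^2 * (L+1)^2 + L + 1 \<le> 6 * L^4" using a L1 by linarith
  have kD: "k^n0 * L^4 = k^(n0+4*p)" unfolding L_def by (simp add: power_add power_mult[symmetric] mult.commute)
  have "k^n0 * (L^2 * (L+1)^2 + L + 1) \<le> k^n0 * (6 * L^4)" using t by (rule mult_le_mono2)
  hence M: "(n - n0) div p \<le> 6 * k^(n0+4*p)" using assms(3) kD unfolding L_def[symmetric] by simp
  define K where "K = k^(n0+4*p)"
  have m1: "(n-n0) mod p < p" using assms(2) by simp
  have m2: "p * ((n-n0) div p) + (n-n0) mod p = n - n0" by (rule mult_div_mod_eq)
  have m3: "p * ((n-n0) div p) \<le> p * (6 * K)" using M unfolding K_def by (rule mult_le_mono2)
  have K1: "K \<ge> 1" unfolding K_def using assms by simp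
  have m4: "n0 \<le> n0 * K" "p \<le> p * K" using K1 by simp_all
  have "n < n0 * K + 6 * (p * K) + p * K" using m1 m2 m3 m4 by linarith
  hence "n < (n0 + 7*p) * K" by (simp add: algebra_simps)
  thus ?thesis unfolding K_def by simp
qed
lemma arith2:
  fixes k n C :: real and D :: nat
  assumes "k \<ge> 1" "D \<ge> 1" "C > 0" "n \<ge> 0" "n \<le> C * k^D"
  shows "k \<ge> (1/C) powr (1/D) * n powr (1/D)"
proof -
  have "(1/C) powr (1/D) * n powr (1/D) = (n / C) powr (1/D)"
    using assms by (simp add: powr_mult[symmetric])
  also have "\<dots> \<le> (k^D) powr (1/D)"
    using assms by (intro powr_mono2) (auto simp: field_simps)
  also have "\<dots> = k" using assms by (simp add: powr_realpow[symmetric] powr_powr)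
  finally show ?thesis .
qed

lemma blk_eq: "(i::nat) < p \<Longrightarrow> j < p \<Longrightarrow> x*p + i = y*p + j \<Longrightarrow> x = y \<and> i = j"
proof -
  assume a: "i < p" "j < p" "x*p + i = y*p + j"
  have "(x*p + i) div p = x" "(x*p + i) mod p = i" using a(1) by simp_all
  moreover have "(y*p+j) div p = y" "(y*p+j) mod p = j" using a(2) by simp_all
  ultimately show ?thesis using a(3) by metis
qed

lemma noinj: "X \<in> A \<Longrightarrow> Y \<in> A \<Longrightarrow> X \<noteq> Y \<Longrightarrow> g X = g Y \<Longrightarrow> \<not> inj_on g A"
  unfolding inj_on_def by blast

lemma bound:
  fixes V :: "'a set" and E :: "'a set set" and f :: "nat \<Rightarrow> nat set \<Rightarrow> nat"
  assumes rg: "is_rgraph r V E" and SE: "S \<subseteq> E" and cS: "card S = 4"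
    and SK: "\<forall>e\<in>S. \<forall>e'\<in>S. e\<noteq>e' \<longrightarrow> e\<inter>e' = K0"
    and n0: "n0 = card (V - (\<Union>e\<in>S. e - K0))" and p: "p = r - card K0"
    and lc: "local_coloring n r V E k f"
  shows "(n - n0) div p \<le> k^n0 * ((k^p)^2*(k^p+1)^2 + k^p + 1)"
proof (rule ccontr)
  assume big: "\<not> ?thesis"
  define M where "M = (n - n0) div p"
  have fV: "finite V" and Ee: "\<And>e. e \<in> E \<Longrightarrow> e \<subseteq> V \<and> card e = r" using rg unfolding is_rgraph_def by auto
  have fe: "\<And>e. e \<in> E \<Longrightarrow> finite e" using Ee fV finite_subset by blast
  obtain e1 e2 e3 e4 where S4: "S = {e1,e2,e3,e4}" and dst: "e1\<noteq>e2" "e1\<noteq>e3" "e1\<noteq>e4" "e2\<noteq>e3" "e2\<noteq>e4" "e3\<noteq>e4"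
    using card4[OF cS] by blast
  have K0e: "K0 \<subseteq> e" if "e \<in> S" for e
  proof -
    obtain e' where "e' \<in> S" "e' \<noteq> e" using S4 dst that by blast
    hence "e \<inter> e' = K0" using SK that by blast
    thus ?thesis by blast
  qed
  have eS: "e \<in> E" "e \<subseteq> V" "card e = r" "finite e" if "e \<in> S" for e using that SE Ee fe by auto
  have K0V: "K0 \<subseteq> V" using K0e[of e1] eS[of e1] S4 by auto
  have fK0: "finite K0" using K0V fV finite_subset by blast
  define P where "P e = e - K0" for e
  have cP: "card (P e) = p" if "e \<in> S" for e
    unfolding P_def p using eS[OF that] K0e[OF that] fK0 by (simp add: card_Diff_subset)
  have Pdis: "P e \<inter> P e' = {}" if "e \<in> S" "e' \<in> S" "e \<noteq> e'" for e e'
  proof -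
    have "e \<inter> e' = K0" using SK that by blast
    thus ?thesis unfolding P_def by blast
  qed
  have p1: "p \<ge> 1"
  proof -
    have "K0 \<noteq> e1"
    proof
      assume "K0 = e1"
      hence "e1 \<subseteq> e2" using K0e[of e2] S4 by auto
      hence "e1 = e2" using eS[of e1] eS[of e2] S4 by (metis card_subset_eq insertCI)
      thus False using dst by simp
    qed
    hence "K0 \<subset> e1" using K0e[of e1] S4 by blast
    hence "card K0 < r" using eS[of e1] S4 by (metis insertCI psubset_card_mono)
    thus ?thesis unfolding p by simp
  qed
  define R where "R = V - (\<Union>e\<in>S. P e)"
  have fR: "finite R" unfolding R_def using fV by simp
  have cR: "card R = n0" unfolding R_def n0 P_def ..
  obtain \<psi> :: "'a \<Rightarrow> nat" and N where \<psi>N: "\<psi> ` R = {i. i < N}" "inj_on \<psi> R"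
    using finite_imp_inj_to_nat_seg[OF fR] by blast
  have "N = n0" using \<psi>N cR card_image[OF \<psi>N(2)] by simp
  hence \<psi>R: "\<psi> ` R = {..<n0}" using \<psi>N(1) by auto
  have K0R: "K0 \<subseteq> R" unfolding R_def P_def using K0V by blast
  have psiR: "\<psi> x < n0" if "x \<in> R" for x using \<psi>R that by blast
  have psiK: "\<psi> x < n0" if "x \<in> K0" for x using psiR K0R that by blast
  have ex\<beta>: "\<exists>g. g ` (P e) = {..<p} \<and> inj_on g (P e)" if "e \<in> S" for e
  proof -
    have "finite (P e)" unfolding P_def using eS[OF that] by simp
    then obtain g :: "'a \<Rightarrow> nat" and N where "g ` (P e) = {i. i < N}" "inj_on g (P e)"
      using finite_imp_inj_to_nat_seg by blast
    moreover have "N = p" using calculation cP[OF that] card_image[of g "P e"] by simp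
    ultimately show ?thesis by auto
  qed
  define \<beta> where "\<beta> e = (SOME g. g ` (P e) = {..<p} \<and> inj_on g (P e))" for e
  have \<beta>: "\<beta> e ` (P e) = {..<p}" "inj_on (\<beta> e) (P e)" if "e \<in> S" for e
    using someI_ex[OF ex\<beta>[OF that]] unfolding \<beta>_def by auto
  define Ed where "Ed j = \<psi> ` K0 \<union> {n0 + j*p ..< n0 + j*p + p}" for j
  have Edne: "Ed y \<noteq> Ed y'" if "y \<noteq> y'" for y y'
  proof
    assume eq: "Ed y = Ed y'"
    have "n0 + y*p \<in> Ed y" unfolding Ed_def using p1 by simp
    hence "n0 + y*p \<in> Ed y'" using eq by simp
    moreover have "n0 + y*p \<notin> \<psi> ` K0" using psiK by fastforce
    ultimately have "n0 + y*p \<in> {n0 + y'*p ..< n0 + y'*p + p}" unfolding Ed_def by blast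
    hence "y'*p \<le> y*p" "y*p < y'*p + p" by simp_all
    hence "y*p - y'*p < p" "y*p + 0 = y'*p + (y*p - y'*p)" by linarith+
    then obtain i where "i < p" "y*p + 0 = y'*p + i" by blast
    thus False using blk_eq[of 0 p i y y'] p1 that by simp
  qed
  have cEd: "card (Ed j) = r" for j
  proof -
    have "card (\<psi> ` K0) = card K0" using card_image inj_on_subset[OF \<psi>N(2) K0R] by blast
    moreover have "\<psi> ` K0 \<inter> {n0 + j*p ..< n0 + j*p + p} = {}" using psiK by fastforce
    moreover have "card K0 \<le> r" using K0e[of e1] eS[of e1] S4 by (metis card_mono insertCI)
    ultimately show ?thesis unfolding Ed_def p using fK0
      by (simp add: card_Un_disjoint)
  qed
  have Mbig: "M > k^n0 * ((k^p)^2*(k^p+1)^2 + k^p + 1)" using big unfolding M_def by simp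
  hence M0: "M > 0" by linarith
  have Mp: "M * p \<le> n - n0" unfolding M_def by (rule div_times_less_eq_dividend)
  have "n - n0 \<noteq> 0" using M0 unfolding M_def by (metis div_0 less_irrefl)
  hence Mn: "n0 + M * p \<le> n" using Mp by linarith
  have EdK: "Ed j \<in> Kedges n r" if "j < M" for j
  proof -
    have "Suc j * p \<le> M*p" using that by (intro mult_le_mono1) simp
    hence "j*p + p \<le> M*p" by simp
    hence "{n0 + j*p ..< n0 + j*p + p} \<subseteq> {..<n}" using Mn by auto
    moreover have "\<psi> ` K0 \<subseteq> {..<n}" using psiK Mn by fastforce
    ultimately show ?thesis unfolding Kedges_def using cEd[of j] unfolding Ed_def by auto
  qed
  have fcol: "f u e \<in> {1..k}" if "u < n" "e \<in> Kedges n r" for u e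
    using lc that unfolding local_coloring_def by blast
  define F where "F j = restrict (\<lambda>u. f u (Ed j)) {..<n0}" for j
  define \<chi> where "\<chi> x y = restrict (\<lambda>i. f (n0 + x*p + i) (Ed y)) {..<p}" for x y
  have FB: "\<forall>j<M. F j \<in> ({..<n0} \<rightarrow>\<^sub>E {1..k})"
    using fcol EdK Mn unfolding F_def by auto
  have \<chi>B: "\<forall>x<M. \<forall>y<M. \<chi> x y \<in> ({..<p} \<rightarrow>\<^sub>E {1..k})"
  proof (intro allI impI)
    fix x y assume xy: "x < M" "y < M"
    have "n0 + x*p + i < n" if "i < p" for i
    proof -
      have "Suc x * p \<le> M*p" using xy by (intro mult_le_mono1) simp
      hence "x*p + p \<le> M*p" by simp
      thus ?thesis using that Mn by linarith
    qed
    thus "\<chi> x y \<in> ({..<p} \<rightarrow>\<^sub>E {1..k})" using fcol EdK[OF xy(2)] unfolding \<chi>_def by auto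
  qed
  have "card ({..<n0} \<rightarrow>\<^sub>E {1..k}) = k^n0" by (simp add: card_funcsetE)
  moreover have "card ({..<p} \<rightarrow>\<^sub>E {1..k}) = k^p" by (simp add: card_funcsetE)
  ultimately obtain a b c d where abcd: "a<M" "b<M" "c<M" "d<M" "a \<noteq> b" "a \<noteq> c" "a \<noteq> d" "b \<noteq> c"
     "b \<noteq> d" "c \<noteq> d" "F c = F d" "\<chi> a c = \<chi> a d" "\<chi> b c = \<chi> b d"
     "\<chi> c a = \<chi> c b" "\<chi> d a = \<chi> d b"
    using core[of M F "{..<n0} \<rightarrow>\<^sub>E {1..k}" \<chi> "{..<p} \<rightarrow>\<^sub>E {1..k}"] FB \<chi>B Mbig
    by (auto simp: finite_PiE)
  define \<sigma> where "\<sigma> e = (if e = e1 then a else if e = e2 then b else if e = e3 then c else d)" for e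
  have \<sigma>: "\<sigma> e1 = a" "\<sigma> e2 = b" "\<sigma> e3 = c" "\<sigma> e4 = d" unfolding \<sigma>_def using dst by simp_all
  have \<sigma>inj: "\<sigma> e = \<sigma> e' \<Longrightarrow> e \<in> S \<Longrightarrow> e' \<in> S \<Longrightarrow> e = e'" for e e'
  proof -
    assume "\<sigma> e = \<sigma> e'" "e \<in> S" "e' \<in> S"
    moreover have "e = e1 \<or> e = e2 \<or> e = e3 \<or> e = e4" "e' = e1 \<or> e' = e2 \<or> e' = e3 \<or> e' = e4"
      using \<open>e \<in> S\<close> \<open>e' \<in> S\<close> unfolding S4 by simp_all
    ultimately show "e = e'" using \<sigma> abcd(5-10) by (elim disjE) simp_all
  qed
  have \<sigma>M: "\<sigma> e < M" for e using abcd(1-4) unfolding \<sigma>_def by simp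
  define pe where "pe v = (THE e. e \<in> S \<and> v \<in> P e)" for v
  have pe: "pe v = e" if "e \<in> S" "v \<in> P e" for v e
    unfolding pe_def
  proof (rule the_equality)
    show "e \<in> S \<and> v \<in> P e" using that by simp
    fix e' assume "e' \<in> S \<and> v \<in> P e'"
    thus "e' = e" using Pdis[of e e'] that by blast
  qed
  define \<phi> where "\<phi> v = (if v \<in> R then \<psi> v else n0 + \<sigma> (pe v) * p + \<beta> (pe v) v)" for v
  have \<phi>P: "\<phi> v = n0 + \<sigma> e * p + \<beta> e v" if "e \<in> S" "v \<in> P e" for v e
  proof -
    have "v \<notin> R" unfolding R_def using that by blast
    thus ?thesis unfolding \<phi>_def using pe[OF that] by simp
  qed
  have \<phi>R: "\<phi> v = \<psi> v" if "v \<in> R" for v unfolding \<phi>_def using that by simp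
  have "(\<Union>e\<in>S. P e) \<subseteq> V" unfolding P_def using eS by blast
  hence Vsplit: "V = R \<union> (\<Union>e\<in>S. P e)" unfolding R_def by auto
  have img: "\<phi> ` e = Ed (\<sigma> e)" if "e \<in> S" for e
  proof -
    have "e = K0 \<union> P e" unfolding P_def using K0e[OF that] by auto
    hence "\<phi> ` e = \<phi> ` K0 \<union> \<phi> ` P e" by (metis image_Un)
    moreover have "\<phi> ` K0 = \<psi> ` K0" using \<phi>R K0R by (intro image_cong) auto
    moreover have "\<phi> ` P e = (\<lambda>i. n0 + \<sigma> e * p + i) ` (\<beta> e ` P e)"
      using \<phi>P[OF that] by (auto simp: image_image intro!: image_cong)
    moreover have "(\<lambda>i. n0 + \<sigma> e * p + i) ` {..<p} = {n0 + \<sigma> e * p ..< n0 + \<sigma> e * p + p}"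
      by (simp add: atLeast0LessThan[symmetric] image_add_atLeastLessThan add.commute)
    ultimately show ?thesis unfolding Ed_def using \<beta>[OF that] by simp
  qed
  have \<phi>inj: "inj_on \<phi> V"
  proof (rule inj_onI)
    fix v w assume v: "v \<in> V" and w: "w \<in> V" and eq: "\<phi> v = \<phi> w"
    show "v = w"
    proof (cases "v \<in> R")
      case True
      show ?thesis
      proof (cases "w \<in> R")
        case True
        thus ?thesis using \<open>v \<in> R\<close> eq \<phi>R \<psi>N(2) by (metis inj_onD)
      next
        case False
        then obtain e where e: "e \<in> S" "w \<in> P e" using w Vsplit by blast
        have "\<phi> v < n0" using \<phi>R[OF True] \<psi>R True by auto
        moreover have "\<phi> w \<ge> n0" using \<phi>P[OF e] by simp
        ultimately show ?thesis using eq by simp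
      qed
    next
      case False
      then obtain e where e: "e \<in> S" "v \<in> P e" using v Vsplit by blast
      show ?thesis
      proof (cases "w \<in> R")
        case True
        have "\<phi> w < n0" using \<phi>R[OF True] \<psi>R True by auto
        moreover have "\<phi> v \<ge> n0" using \<phi>P[OF e] by simp
        ultimately show ?thesis using eq by simp
      next
        case False
        then obtain e' where e': "e' \<in> S" "w \<in> P e'" using w Vsplit by blast
        have "\<beta> e v < p" "\<beta> e' w < p" using \<beta>(1)[OF e(1)] \<beta>(1)[OF e'(1)] e(2) e'(2) by auto
        moreover have "\<sigma> e * p + \<beta> e v = \<sigma> e' * p + \<beta> e' w" using eq \<phi>P[OF e] \<phi>P[OF e'] by simp
        ultimately have "\<sigma> e = \<sigma> e'" "\<beta> e v = \<beta> e' w" using blk_eq by blast+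
        hence "e = e'" "\<beta> e v = \<beta> e w" using \<sigma>inj e(1) e'(1) by auto
        thus ?thesis using \<beta>(2)[OF e(1)] e(2) e'(2) by (metis inj_onD)
      qed
    qed
  qed
  have \<phi>n: "\<phi> ` V \<subseteq> {..<n}"
  proof
    fix u assume "u \<in> \<phi> ` V"
    then obtain v where v: "v \<in> V" "u = \<phi> v" by blast
    show "u \<in> {..<n}"
    proof (cases "v \<in> R")
      case True
      thus ?thesis using v \<phi>R[OF True] psiR[OF True] Mn by simp
    next
      case False
      then obtain e where e: "e \<in> S" "v \<in> P e" using v Vsplit by blast
      have "u \<in> Ed (\<sigma> e)" using img[OF e(1)] v e P_def by blast
      thus ?thesis using EdK[OF \<sigma>M[of e]] unfolding Kedges_def by blast
    qed
  qed
  obtain u where u: "u \<in> \<phi> ` V" and uinj: "inj_on (f u) ((\<lambda>e. \<phi> ` e) ` E)"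
    using lc \<phi>inj \<phi>n unfolding local_coloring_def by blast
  have inI: "Ed (\<sigma> e) \<in> (\<lambda>e. \<phi> ` e) ` E" if "e \<in> S" for e
    using img[OF that] SE that by (metis image_eqI subsetD)
  have inA: "Ed a \<in> (\<lambda>e. \<phi> ` e) ` E" "Ed b \<in> (\<lambda>e. \<phi> ` e) ` E" "Ed c \<in> (\<lambda>e. \<phi> ` e) ` E" "Ed d \<in> (\<lambda>e. \<phi> ` e) ` E"
    using inI[of e1] inI[of e2] inI[of e3] inI[of e4] \<sigma> S4 by auto
  obtain v where v: "v \<in> V" "u = \<phi> v" using u by blast
  show False
  proof (cases "v \<in> R")
    case True
    hence "u < n0" using v \<phi>R[OF True] psiR[OF True] by simp
    have "F c u = F d u" using abcd(11) by simp
    hence "f u (Ed c) = f u (Ed d)" using \<open>u < n0\<close> unfolding F_def by simp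
    thus False using noinj[OF inA(3) inA(4) Edne[OF abcd(10)]] uinj by blast
  next
    case False
    then obtain e where e: "e \<in> S" "v \<in> P e" using v Vsplit by blast
    define i where "i = \<beta> e v"
    have i: "i < p" using \<beta>(1)[OF e(1)] e(2) unfolding i_def by auto
    have uu: "u = n0 + \<sigma> e * p + i" using v \<phi>P[OF e] unfolding i_def by simp
    have chi: "f u (Ed y) = f u (Ed y')" if "\<chi> (\<sigma> e) y = \<chi> (\<sigma> e) y'" for y y'
    proof -
      have "\<chi> (\<sigma> e) y i = \<chi> (\<sigma> e) y' i" using that by simp
      thus ?thesis using i uu unfolding \<chi>_def by simp
    qed
    have "e = e1 \<or> e = e2 \<or> e = e3 \<or> e = e4" using e S4 by auto
    thus False
    proof (elim disjE)
      assume "e = e1"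
      hence "\<sigma> e = a" using \<sigma> by simp
      hence "f u (Ed c) = f u (Ed d)" using chi[of c d] abcd(12) by simp
      thus False using noinj[OF inA(3) inA(4) Edne[OF abcd(10)]] uinj by blast
    next
      assume "e = e2"
      hence "\<sigma> e = b" using \<sigma> by simp
      hence "f u (Ed c) = f u (Ed d)" using chi[of c d] abcd(13) by simp
      thus False using noinj[OF inA(3) inA(4) Edne[OF abcd(10)]] uinj by blast
    next
      assume "e = e3"
      hence "\<sigma> e = c" using \<sigma> by simp
      hence "f u (Ed a) = f u (Ed b)" using chi[of a b] abcd(14) by simp
      thus False using noinj[OF inA(1) inA(2) Edne[OF abcd(5)]] uinj by blast
    next
      assume "e = e4"
      hence "\<sigma> e = d" using \<sigma> by simp
      hence "f u (Ed a) = f u (Ed b)" using chi[of a b] abcd(15) by simp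
      thus False using noinj[OF inA(1) inA(2) Edne[OF abcd(5)]] uinj by blast
    qed
  qed
qed

lemma sun_p1:
  fixes V :: "'a set"
  assumes rg: "is_rgraph r V E" and SE: "S \<subseteq> E" and cS: "card S = 4"
    and SK: "\<forall>e\<in>S. \<forall>e'\<in>S. e\<noteq>e' \<longrightarrow> e\<inter>e' = K0"
  shows "card K0 < r" "V \<noteq> {}"
proof -
  have fV: "finite V" and Ee: "\<And>e. e \<in> E \<Longrightarrow> e \<subseteq> V \<and> card e = r" using rg unfolding is_rgraph_def by auto
  obtain e1 e2 e3 e4 where S4: "S = {e1,e2,e3,e4}" and dst: "e1\<noteq>e2" "e1\<noteq>e3" "e1\<noteq>e4" "e2\<noteq>e3" "e2\<noteq>e4" "e3\<noteq>e4"
    using card4[OF cS] by blast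
  have e12: "e1 \<in> E" "e2 \<in> E" using SE S4 by auto
  have K: "e1 \<inter> e2 = K0" using SK S4 dst by simp
  have fe: "finite e1" "finite e2" using e12 Ee fV finite_subset by blast+
  have "K0 \<noteq> e1"
  proof
    assume "K0 = e1"
    hence "e1 \<subseteq> e2" using K by auto
    hence "e1 = e2" using Ee[OF e12(1)] Ee[OF e12(2)] fe by (metis card_subset_eq)
    thus False using dst by simp
  qed
  hence "K0 \<subset> e1" using K by auto
  thus "card K0 < r" using Ee[OF e12(1)] fe by (metis psubset_card_mono)
  have "e1 \<noteq> e2" by (rule dst(1))
  hence "e1 \<noteq> {} \<or> e2 \<noteq> {}" by auto
  thus "V \<noteq> {}" using Ee[OF e12(1)] Ee[OF e12(2)] by auto
qed

lemma exists_lc: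
  fixes V :: "'a set"
  assumes rg: "is_rgraph r V E" and "V \<noteq> {}"
  shows "\<exists>k f. local_coloring n r V E k f"
proof -
  have Ee: "\<And>e. e \<in> E \<Longrightarrow> e \<subseteq> V \<and> card e = r" using rg unfolding is_rgraph_def by auto
  have "finite (Kedges n r)" unfolding Kedges_def
    by (rule finite_subset[of _ "Pow {..<n}"]) auto
  then obtain h :: "nat set \<Rightarrow> nat" and N where hN: "h ` Kedges n r = {i. i < N}" "inj_on h (Kedges n r)"
    using finite_imp_inj_to_nat_seg by blast
  define f where "f v e = h e + 1" for v :: nat and e
  have "local_coloring n r V E N f"
    unfolding local_coloring_def
  proof (intro conjI allI impI ballI)
    fix v e assume "v < n" "e \<in> Kedges n r"
    hence "h e < N" using hN(1) by blast
    thus "f v e \<in> {1..N}" unfolding f_def by simp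
  next
    fix \<phi> :: "'a \<Rightarrow> nat" assume \<phi>: "inj_on \<phi> V \<and> \<phi> ` V \<subseteq> {..<n}"
    obtain v where "v \<in> V" using assms(2) by blast
    have sub: "(\<lambda>e. \<phi> ` e) ` E \<subseteq> Kedges n r"
    proof
      fix x assume "x \<in> (\<lambda>e. \<phi> ` e) ` E"
      then obtain e where e: "e \<in> E" "x = \<phi> ` e" by blast
      have "inj_on \<phi> e" using \<phi> Ee[OF e(1)] inj_on_subset by blast
      hence "card x = r" using e Ee[OF e(1)] by (simp add: card_image)
      moreover have "x \<subseteq> {..<n}" using e \<phi> Ee[OF e(1)] by blast
      ultimately show "x \<in> Kedges n r" unfolding Kedges_def by simp
    qed
    have "inj_on (f (\<phi> v)) ((\<lambda>e. \<phi> ` e) ` E)"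
      using inj_on_subset[OF hN(2) sub] unfolding f_def inj_on_def by simp
    thus "\<exists>u\<in>\<phi> ` V. inj_on (f u) ((\<lambda>e. \<phi> ` e) ` E)" using \<open>v \<in> V\<close> by blast
  qed
  thus ?thesis by blast
qed

theorem theorem5:
  fixes r :: nat and V :: "'a set" and E :: "'a set set"
  assumes "r \<ge> 2" and "is_rgraph r V E" and "card E \<ge> g_sun r 4"
  shows "\<exists>b>0. (\<lambda>n. real (C_loc r n V E)) \<in> \<Omega>(\<lambda>n. real n powr b)"
proof -
  obtain S K0 where SK: "S \<subseteq> E" "card S = 4" "\<forall>e\<in>S. \<forall>e'\<in>S. e\<noteq>e' \<longrightarrow> e\<inter>e' = K0"
    using sunflower_in_E[OF assms(2,3)] by blast
  have Kr: "card K0 < r" and Vne: "V \<noteq> {}" using sun_p1[OF assms(2) SK] by auto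
  define n0 where "n0 = card (V - (\<Union>e\<in>S. e - K0))"
  define p where "p = r - card K0"
  have p1: "p \<ge> 1" unfolding p_def using Kr by simp
  define D where "D = n0 + 4*p"
  define C where "C = n0 + 7*p"
  have D1: "D \<ge> 1" and C1: "C \<ge> 1" unfolding D_def C_def using p1 by simp_all
  define c :: real where "c = (1 / real C) powr (1 / real D)"
  have cpos: "c > 0" unfolding c_def using C1 by simp
  have key: "c * real n powr (1 / real D) \<le> real (C_loc r n V E)" if "n \<ge> r" for n
  proof -
    define k where "k = C_loc r n V E"
    obtain f where lc: "local_coloring n r V E k f"
      unfolding k_def C_loc_def using LeastI_ex[OF exists_lc[OF assms(2) Vne]] by blast
    have "{..<r} \<in> Kedges n r" unfolding Kedges_def using that by auto
    moreover have "0 < n" using that assms(1) by simp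
    ultimately have "f 0 {..<r} \<in> {1..k}" using lc unfolding local_coloring_def by blast
    hence k1: "k \<ge> 1" by simp
    have "(n - n0) div p \<le> k^n0 * ((k^p)^2*(k^p+1)^2 + k^p + 1)"
      by (rule bound[OF assms(2) SK n0_def p_def lc])
    hence "n \<le> C * k^D" unfolding C_def D_def by (rule arith1[OF k1 p1])
    hence "real n \<le> real C * real k ^ D" by (metis of_nat_le_iff of_nat_mult of_nat_power)
    hence "real k \<ge> (1/real C) powr (1/real D) * real n powr (1/real D)"
      by (intro arith2) (use k1 D1 C1 in auto)
    thus ?thesis unfolding c_def k_def .
  qed
  have "(\<lambda>n. real (C_loc r n V E)) \<in> \<Omega>(\<lambda>n. real n powr (1 / real D))"
  proof (rule landau_omega.bigI[OF cpos])
    show "\<forall>\<^sub>F n in at_top. c * norm (real n powr (1 / real D)) \<le> norm (real (C_loc r n V E))"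
      using eventually_ge_at_top[of r] by eventually_elim (use key in simp)
  qed
  moreover have "1 / real D > 0" using D1 by simp
  ultimately show ?thesis by blast
qed

end
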